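(* Assume $0<q_{00}$ and that $M=V\Lambda V^{-1}$ with $\Lambda=\mathrm{diag}(\lambda_0,\dots,\lambda_r)$, all $\lambda_x\neq 0$, $\lambda_r=1$ and column $r$ of $V$ equal to $e_r$. Define $\alpha^0_x=\frac{\lambda_x}{q_{00}}V_{0x}(V^{-1})_{x0}$ for $x\in\mathcal S$, and, if $\nu_0<1$, $\nu'=\frac{1}{1-\nu_0}(0,\nu_1,\dots,\nu_r)^{\mathrm T}$ and $\alpha^1_x=\frac{\lambda_x}{q_{00}}V_{0x}\sum_{z\in\mathcal S}(V^{-1})_{xz}\nu'_z$. Then $\alpha^0_r=\alpha^1_r=0$ and $$\sum_{x\in\mathcal S}\alpha^0_x=1,\qquad \sum_{x\in\mathcal S}\frac{\alpha^0_x}{\lambda_x}=\frac1{q_{00}},\qquad 0\le q_{00}\sum_{x\in\mathcal S}\alpha^1_x\le 1,\qquad \sum_{x\in\mathcal S}\frac{\alpha^1_x}{\lambda_x}=0.$$ Moreover $\alpha_x=\nu_0\alpha^0_x+(1-\nu_0)\alpha^1_x$, where $\alpha_x=V_{0x}\frac{\lambda_x}{q_{00}}\sum_z(V^{-1})_{xz}\nu_z$.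
   Context: Fix $r\ge1$ and $\mathcal S=\{0,1,\dots,r\}$. Let $q_{xz}\in[0,1]$ for $x\in\mathcal S$, $z\in\{0,\dots,r-1\}$, with $\sum_x q_{xz}=1$ for each such $z$. Define column-stochastic matrices $M^{\ell}$, $M^{s}$ indexed by $\mathcal S$: column $0$ of $M^\ell$ is $e_0$, column $r$ of $M^\ell$ is $e_r$, $M^\ell_{xz}=q_{xz}$ for $1\le z\le r-1$; column $0$ of $M^s$ is $(q_{00},\dots,q_{r0})^{\mathrm T}$ and $M^s_{xz}=\delta_{xz}$ for $z\ge1$. Set $M=M^sM^\ell$. $\nu=(\nu_0,\dots,\nu_r)$ is a probability vector on $\mathcal S$; $e_x$ denotes the $x$-th standard basis vector. *)

theory Defs
  imports Complex_Main
begin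

text \<open>Matrices indexed by S = {0..r} are represented as functions nat => nat => real;
only entries with indices in {0..r} are meaningful.\<close>

definition matmul :: "nat \<Rightarrow> (nat \<Rightarrow> nat \<Rightarrow> real) \<Rightarrow> (nat \<Rightarrow> nat \<Rightarrow> real) \<Rightarrow> nat \<Rightarrow> nat \<Rightarrow> real" where
  "matmul r A B i j = (\<Sum>k\<le>r. A i k * B k j)"

definition Ml :: "nat \<Rightarrow> (nat \<Rightarrow> nat \<Rightarrow> real) \<Rightarrow> nat \<Rightarrow> nat \<Rightarrow> real" where
  "Ml r q x z = (if z = 0 then (if x = 0 then 1 else 0)
                 else if z = r then (if x = r then 1 else 0)
                 else q x z)"

definition Ms :: "(nat \<Rightarrow> nat \<Rightarrow> real) \<Rightarrow> nat \<Rightarrow> nat \<Rightarrow> real" where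
  "Ms q x z = (if z = 0 then q x 0 else (if x = z then 1 else 0))"

definition Mmat :: "nat \<Rightarrow> (nat \<Rightarrow> nat \<Rightarrow> real) \<Rightarrow> nat \<Rightarrow> nat \<Rightarrow> real" where
  "Mmat r q = matmul r (Ms q) (Ml r q)"

text \<open>alpha^0_x = lambda_x / q00 * V_{0x} * (V^{-1})_{x0}; W denotes V^{-1}.\<close>
definition alpha0 :: "(nat \<Rightarrow> nat \<Rightarrow> real) \<Rightarrow> (nat \<Rightarrow> nat \<Rightarrow> real) \<Rightarrow> (nat \<Rightarrow> nat \<Rightarrow> real) \<Rightarrow> (nat \<Rightarrow> real) \<Rightarrow> nat \<Rightarrow> real" where
  "alpha0 q V W lam x = lam x / q 0 0 * V 0 x * W x 0"

definition nuprime :: "(nat \<Rightarrow> real) \<Rightarrow> nat \<Rightarrow> real" where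
  "nuprime nu z = (if z = 0 then 0 else nu z / (1 - nu 0))"

definition alpha1 :: "nat \<Rightarrow> (nat \<Rightarrow> nat \<Rightarrow> real) \<Rightarrow> (nat \<Rightarrow> nat \<Rightarrow> real) \<Rightarrow> (nat \<Rightarrow> nat \<Rightarrow> real) \<Rightarrow> (nat \<Rightarrow> real) \<Rightarrow> (nat \<Rightarrow> real) \<Rightarrow> nat \<Rightarrow> real" where
  "alpha1 r q V W lam nu x = lam x / q 0 0 * V 0 x * (\<Sum>z\<le>r. W x z * nuprime nu z)"

definition alpha :: "nat \<Rightarrow> (nat \<Rightarrow> nat \<Rightarrow> real) \<Rightarrow> (nat \<Rightarrow> nat \<Rightarrow> real) \<Rightarrow> (nat \<Rightarrow> nat \<Rightarrow> real) \<Rightarrow> (nat \<Rightarrow> real) \<Rightarrow> (nat \<Rightarrow> real) \<Rightarrow> nat \<Rightarrow> real" where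
  "alpha r q V W lam nu x = V 0 x * (lam x / q 0 0) * (\<Sum>z\<le>r. W x z * nu z)"

end

theory Submission
  imports Defs
begin

theorem mainTheorem4:
  fixes r :: nat and q V W :: "nat \<Rightarrow> nat \<Rightarrow> real" and lam nu :: "nat \<Rightarrow> real"
  assumes r: "r \<ge> 1"
    and q_range: "\<And>x z. x \<le> r \<Longrightarrow> z < r \<Longrightarrow> 0 \<le> q x z \<and> q x z \<le> 1"
    and q_col: "\<And>z. z < r \<Longrightarrow> (\<Sum>x\<le>r. q x z) = 1"
    and nu_nonneg: "\<And>x. x \<le> r \<Longrightarrow> 0 \<le> nu x"
    and nu_sum: "(\<Sum>x\<le>r. nu x) = 1"
    and q00: "0 < q 0 0"
    and VW: "\<And>i j. i \<le> r \<Longrightarrow> j \<le> r \<Longrightarrow> matmul r V W i j = (if i = j then 1 else 0)"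
    and WV: "\<And>i j. i \<le> r \<Longrightarrow> j \<le> r \<Longrightarrow> matmul r W V i j = (if i = j then 1 else 0)"
    and diag: "\<And>i j. i \<le> r \<Longrightarrow> j \<le> r \<Longrightarrow>
                 Mmat r q i j = (\<Sum>y\<le>r. V i y * lam y * W y j)"
    and lam_nz: "\<And>x. x \<le> r \<Longrightarrow> lam x \<noteq> 0"
    and lam_r: "lam r = 1"
    and V_col_r: "\<And>x. x \<le> r \<Longrightarrow> V x r = (if x = r then 1 else 0)"
  shows "alpha0 q V W lam r = 0
       \<and> (\<Sum>x\<le>r. alpha0 q V W lam x) = 1
       \<and> (\<Sum>x\<le>r. alpha0 q V W lam x / lam x) = 1 / q 0 0
       \<and> (nu 0 < 1 \<longrightarrow>
            alpha1 r q V W lam nu r = 0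
          \<and> 0 \<le> q 0 0 * (\<Sum>x\<le>r. alpha1 r q V W lam nu x)
          \<and> q 0 0 * (\<Sum>x\<le>r. alpha1 r q V W lam nu x) \<le> 1
          \<and> (\<Sum>x\<le>r. alpha1 r q V W lam nu x / lam x) = 0
          \<and> (\<forall>x\<le>r. alpha r q V W lam nu x
                = nu 0 * alpha0 q V W lam x + (1 - nu 0) * alpha1 r q V W lam nu x))"
proof -
  have r0: "0 < r" using r by simp
  have q00le: "q 0 0 \<le> 1" using q_range[of 0 0] r0 by simp
  have M0: "(\<Sum>y\<le>r. V 0 y * lam y * W y z) = q 0 0 * Ml r q 0 z" if z: "z \<le> r" for z
  proof -
    have "(\<Sum>y\<le>r. V 0 y * lam y * W y z) = Mmat r q 0 z" using diag[of 0 z] z by simp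
    also have "\<dots> = (\<Sum>k\<le>r. Ms q 0 k * Ml r q k z)" by (simp add: Mmat_def matmul_def)
    also have "\<dots> = (\<Sum>k\<le>r. if k = 0 then q 0 0 * Ml r q 0 z else 0)"
      by (rule sum.cong) (auto simp: Ms_def)
    also have "\<dots> = q 0 0 * Ml r q 0 z" by simp
    finally show ?thesis .
  qed
  have VW0: "(\<Sum>x\<le>r. V 0 x * W x z) = (if z = 0 then 1 else 0)" if "z \<le> r" for z
    using VW[of 0 z] that by (simp add: matmul_def)
  have V0r: "V 0 r = 0" using V_col_r[of 0] r0 by simp
  have A0r: "alpha0 q V W lam r = 0" by (simp add: alpha0_def V0r)
  have A0s: "(\<Sum>x\<le>r. alpha0 q V W lam x) = 1"
  proof -
    have "(\<Sum>x\<le>r. alpha0 q V W lam x) = (\<Sum>x\<le>r. V 0 x * lam x * W x 0) / q 0 0"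
      by (simp add: alpha0_def sum_divide_distrib mult_ac)
    also have "\<dots> = 1" using M0[of 0] q00 by (simp add: Ml_def)
    finally show ?thesis .
  qed
  have A0l: "(\<Sum>x\<le>r. alpha0 q V W lam x / lam x) = 1 / q 0 0"
  proof -
    have "(\<Sum>x\<le>r. alpha0 q V W lam x / lam x) = (\<Sum>x\<le>r. V 0 x * W x 0) / q 0 0"
      unfolding sum_divide_distrib
      by (rule sum.cong) (auto simp: alpha0_def lam_nz)
    also have "\<dots> = 1 / q 0 0" using VW0[of 0] by simp
    finally show ?thesis .
  qed
  have part2: "alpha1 r q V W lam nu r = 0
          \<and> 0 \<le> q 0 0 * (\<Sum>x\<le>r. alpha1 r q V W lam nu x)
          \<and> q 0 0 * (\<Sum>x\<le>r. alpha1 r q V W lam nu x) \<le> 1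
          \<and> (\<Sum>x\<le>r. alpha1 r q V W lam nu x / lam x) = 0
          \<and> (\<forall>x\<le>r. alpha r q V W lam nu x
                = nu 0 * alpha0 q V W lam x + (1 - nu 0) * alpha1 r q V W lam nu x)"
    if nu0: "nu 0 < 1"
  proof -
    define np where "np = nuprime nu"
    have A1r: "alpha1 r q V W lam nu r = 0" by (simp add: alpha1_def V0r)
    have "q 0 0 * (\<Sum>x\<le>r. alpha1 r q V W lam nu x)
        = (\<Sum>x\<le>r. \<Sum>z\<le>r. V 0 x * lam x * W x z * np z)"
      unfolding sum_distrib_left alpha1_def np_def using q00
      by (intro sum.cong refl) (simp add: sum_distrib_left mult_ac)
    also have "\<dots> = (\<Sum>z\<le>r. (\<Sum>x\<le>r. V 0 x * lam x * W x z) * np z)"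
      by (subst sum.swap) (simp add: sum_distrib_right)
    also have "\<dots> = (\<Sum>z\<le>r. q 0 0 * (Ml r q 0 z * np z))"
      by (rule sum.cong) (auto simp: M0)
    also have "\<dots> = q 0 0 * (\<Sum>z\<le>r. Ml r q 0 z * np z)" by (simp add: sum_distrib_left)
    finally have S: "q 0 0 * (\<Sum>x\<le>r. alpha1 r q V W lam nu x) = q 0 0 * (\<Sum>z\<le>r. Ml r q 0 z * np z)" .
    have t0: "0 \<le> Ml r q 0 z * np z" if "z \<le> r" for z
    proof -
      have "0 \<le> Ml r q 0 z" using q_range[of 0 z] that by (auto simp: Ml_def)
      moreover have "0 \<le> np z" using nu_nonneg[of z] that nu0 by (auto simp: np_def nuprime_def)
      ultimately show ?thesis by simp
    qed
    have t1: "Ml r q 0 z * np z \<le> np z" if "z \<le> r" for z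
    proof -
      have "Ml r q 0 z \<le> 1" using q_range[of 0 z] that by (auto simp: Ml_def)
      moreover have "0 \<le> np z" using nu_nonneg[of z] that nu0 by (auto simp: np_def nuprime_def)
      ultimately show ?thesis using mult_left_mono[of "Ml r q 0 z" 1 "np z"] by (simp add: mult.commute)
    qed
    have npsum: "(\<Sum>z\<le>r. np z) = 1"
    proof -
      have "(\<Sum>z\<le>r. np z) = (\<Sum>z\<le>r. (nu z - (if z = 0 then nu 0 else 0)) / (1 - nu 0))"
        by (rule sum.cong) (auto simp: np_def nuprime_def)
      also have "\<dots> = ((\<Sum>z\<le>r. nu z) - nu 0) / (1 - nu 0)"
        by (simp add: sum_divide_distrib[symmetric] sum_subtractf)
      also have "\<dots> = 1" using nu_sum nu0 by simp
      finally show ?thesis .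
    qed
    have lo: "0 \<le> (\<Sum>z\<le>r. Ml r q 0 z * np z)" by (rule sum_nonneg) (simp add: t0)
    have hi: "(\<Sum>z\<le>r. Ml r q 0 z * np z) \<le> 1"
      using sum_mono[of "{..r}" "\<lambda>z. Ml r q 0 z * np z" np] t1 npsum by simp
    have c1: "0 \<le> q 0 0 * (\<Sum>x\<le>r. alpha1 r q V W lam nu x)" using S lo q00 by simp
    have c2: "q 0 0 * (\<Sum>x\<le>r. alpha1 r q V W lam nu x) \<le> 1"
    proof -
      have "q 0 0 * (\<Sum>z\<le>r. Ml r q 0 z * np z) \<le> q 0 0 * 1"
        using hi q00 by (intro mult_left_mono) auto
      then show ?thesis unfolding S using q00le by linarith
    qed
    have "(\<Sum>x\<le>r. alpha1 r q V W lam nu x / lam x)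
        = (\<Sum>x\<le>r. \<Sum>z\<le>r. V 0 x * W x z * np z / q 0 0)"
      unfolding alpha1_def np_def
      by (intro sum.cong refl) (simp add: lam_nz sum_distrib_left sum_divide_distrib mult_ac)
    also have "\<dots> = (\<Sum>z\<le>r. (\<Sum>x\<le>r. V 0 x * W x z) * np z / q 0 0)"
      by (subst sum.swap) (simp add: sum_distrib_right sum_divide_distrib)
    also have "\<dots> = (\<Sum>z\<le>r. (if z = 0 then np 0 / q 0 0 else 0))"
      by (rule sum.cong) (auto simp: VW0)
    also have "\<dots> = 0" by (simp add: np_def nuprime_def)
    finally have c3: "(\<Sum>x\<le>r. alpha1 r q V W lam nu x / lam x) = 0" .
    have c4: "\<forall>x\<le>r. alpha r q V W lam nu x
                = nu 0 * alpha0 q V W lam x + (1 - nu 0) * alpha1 r q V W lam nu x"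
    proof (intro allI impI)
      fix x assume "x \<le> r"
      have "(\<Sum>z\<le>r. W x z * nu z) = (\<Sum>z\<le>r. nu 0 * (if z = 0 then W x 0 else 0) + (1 - nu 0) * (W x z * nuprime nu z))"
        by (rule sum.cong) (use nu0 in \<open>auto simp: nuprime_def field_simps\<close>)
      also have "\<dots> = nu 0 * W x 0 + (1 - nu 0) * (\<Sum>z\<le>r. W x z * nuprime nu z)"
        by (simp add: sum.distrib sum_distrib_left[symmetric])
      finally have e: "(\<Sum>z\<le>r. W x z * nu z) = nu 0 * W x 0 + (1 - nu 0) * (\<Sum>z\<le>r. W x z * nuprime nu z)" .
      show "alpha r q V W lam nu x
                = nu 0 * alpha0 q V W lam x + (1 - nu 0) * alpha1 r q V W lam nu x"
        unfolding alpha_def alpha0_def alpha1_def e using q00 by (simp add: field_simps)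
    qed
    show ?thesis using A1r c1 c2 c3 c4 by blast
  qed
  show ?thesis using A0r A0s A0l part2 by blast
qed

end
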